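(* Let $p>1$ and let $\varphi$ be an analytic self-map of $\mathbb{D}$ with $\varphi\in S^p$. Then $D_\varphi:S^p\to S^p$ is bounded if and only if $\|\varphi\|_\infty=\sup_{z\in\mathbb{D}}|\varphi(z)|<1$.
   Context: $\mathbb{D}$ is the open unit disk. For $p>1$, $H^p$ is the Hardy space on $\mathbb{D}$ with norm $\|g\|_{H^p}^p=\sup_{0<r<1}\int_0^{2\pi}|g(re^{i\theta})|^p\frac{d\theta}{2\pi}$; $S^p$ is the space of analytic $f$ on $\mathbb{D}$ with $f'\in H^p$, normed by $\|f\|_{S^p}=|f(0)|+\|f'\|_{H^p}$. The composition-differentiation operator is $D_\varphi f=f'\circ\varphi$. *)

theory Defs
  imports "HOL-Complex_Analysis.Complex_Analysis"
begin

definition hardy_mean :: "real \<Rightarrow> (complex \<Rightarrow> complex) \<Rightarrow> real \<Rightarrow> real" where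
  "hardy_mean p g r =
     integral {0..2*pi} (\<lambda>t. norm (g (complex_of_real r * cis t)) powr p) / (2*pi)"

definition in_Hardy :: "real \<Rightarrow> (complex \<Rightarrow> complex) \<Rightarrow> bool" where
  "in_Hardy p g \<longleftrightarrow> g holomorphic_on ball 0 1 \<and> bdd_above (hardy_mean p g ` {0<..<1})"

definition Hardy_norm :: "real \<Rightarrow> (complex \<Rightarrow> complex) \<Rightarrow> real" where
  "Hardy_norm p g = (SUP r\<in>{0<..<1}. hardy_mean p g r) powr (1/p)"

definition in_Sp :: "real \<Rightarrow> (complex \<Rightarrow> complex) \<Rightarrow> bool" where
  "in_Sp p f \<longleftrightarrow> f holomorphic_on ball 0 1 \<and> in_Hardy p (deriv f)"

definition Sp_norm :: "real \<Rightarrow> (complex \<Rightarrow> complex) \<Rightarrow> real" where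
  "Sp_norm p f = norm (f 0) + Hardy_norm p (deriv f)"

definition comp_diff :: "(complex \<Rightarrow> complex) \<Rightarrow> (complex \<Rightarrow> complex) \<Rightarrow> (complex \<Rightarrow> complex)" where
  "comp_diff \<phi> f = deriv f \<circ> \<phi>"

definition comp_diff_bounded_Sp :: "real \<Rightarrow> (complex \<Rightarrow> complex) \<Rightarrow> bool" where
  "comp_diff_bounded_Sp p \<phi> \<longleftrightarrow>
     (\<forall>f. in_Sp p f \<longrightarrow> in_Sp p (comp_diff \<phi> f)) \<and>
     (\<exists>C. \<forall>f. in_Sp p f \<longrightarrow> Sp_norm p (comp_diff \<phi> f) \<le> C * Sp_norm p f)"

end

theory Submission
  imports Defs
begin


lemma kernel_identity:
  fixes h :: "complex \<Rightarrow> complex"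
  assumes holh: "h holomorphic_on ball 0 R" and "0 < \<rho>" "\<rho> < R" and z: "norm z < \<rho>"
  shows "((\<lambda>t. h (of_real \<rho> * cis t) * of_real ((\<rho>^2 - (norm z)^2) / (norm (of_real \<rho> * cis t - z))^2))
           has_integral (2 * pi * h z)) {0..2*pi}"
proof -
  define F where "F u = h u * of_real (\<rho>^2 - (norm z)^2) / (of_real (\<rho>^2) - cnj z * u)" for u
  have nz: "of_real (\<rho>^2) - cnj z * u \<noteq> 0" if "norm u \<le> \<rho>" for u
  proof
    assume "of_real (\<rho>^2) - cnj z * u = 0"
    then have "norm (cnj z * u) = \<rho>^2" by (metis eq_iff_diff_eq_0 norm_of_real abs_of_nonneg zero_le_power2 real_norm_def norm_power)
    moreover have "norm (cnj z * u) < \<rho>^2"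
    proof -
      have "norm z * norm u \<le> norm z * \<rho>" using that by (simp add: mult_left_mono)
      also have "\<dots> < \<rho> * \<rho>" using z \<open>0<\<rho>\<close> by simp
      finally show ?thesis by (simp add: norm_mult power2_eq_square)
    qed
    ultimately show False by simp
  qed
  have sub: "cball 0 \<rho> \<subseteq> ball 0 R" using \<open>\<rho> < R\<close> by auto
  have contF: "continuous_on (cball 0 \<rho>) F"
    unfolding F_def
    by (intro continuous_intros holomorphic_on_imp_continuous_on[OF holomorphic_on_subset[OF holh sub]])
       (use nz in auto)
  have holF: "F holomorphic_on ball 0 \<rho>"
    unfolding F_def
    by (intro holomorphic_intros holomorphic_on_subset[OF holh]) (use sub nz in auto)
  have "((\<lambda>u. F u/(u-z)) has_contour_integral (2 * of_real pi * \<i> * F z)) (circlepath 0 \<rho>)"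
    by (rule Cauchy_integral_circlepath[OF contF holF]) (use z in simp)
  then have "((\<lambda>t. F (of_real \<rho> * cis t)/(of_real \<rho> * cis t - z) * of_real \<rho> * \<i> * cis t) has_integral (2 * of_real pi * \<i> * F z)) {0..2*pi}"
    unfolding circlepath_def by (subst (asm) has_contour_integral_part_circlepath_iff) auto
  then have "((\<lambda>t. (F (of_real \<rho> * cis t)/(of_real \<rho> * cis t - z) * of_real \<rho> * \<i> * cis t) * (-\<i>)) has_integral (2 * of_real pi * \<i> * F z) * (-\<i>)) {0..2*pi}"
    by (rule has_integral_mult_left)
  moreover have "F z = h z"
  proof -
    have "cnj z * z = of_real ((norm z)^2)" by (metis complex_norm_square mult.commute)
    moreover have "of_real (\<rho>^2) - of_real ((norm z)^2) \<noteq> (0::complex)"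
      proof -
      have "(norm z)^2 < \<rho>^2" using z by (simp add: power_strict_mono)
      then show ?thesis by (metis less_irrefl of_real_diff of_real_eq_0_iff eq_iff_diff_eq_0)
    qed
    ultimately show ?thesis unfolding F_def by simp
  qed
  moreover have "(F (of_real \<rho> * cis t)/(of_real \<rho> * cis t - z) * of_real \<rho> * \<i> * cis t) * (-\<i>) =
     h (of_real \<rho> * cis t) * of_real ((\<rho>^2 - (norm z)^2) / (norm (of_real \<rho> * cis t - z))^2)" for t
  proof -
    define u where "u = of_real \<rho> * cis t"
    have nu: "norm u = \<rho>" using \<open>0<\<rho>\<close> by (simp add: u_def norm_mult)
    have uz: "u - z \<noteq> 0" using nu z by auto
    have u0: "u \<noteq> 0" using nu \<open>0<\<rho>\<close> by auto
    have "of_real (\<rho>^2) = u * cnj u" using nu complex_norm_square[of u] by simp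
    then have e1: "of_real (\<rho>^2) - cnj z * u = u * cnj (u - z)" by (simp add: algebra_simps)
    have e2: "of_real ((norm (u - z))^2) = (u - z) * cnj (u - z)" by (rule complex_norm_square)
    have cz: "cnj (u - z) \<noteq> 0" using uz by simp
    have "(F u/(u - z) * of_real \<rho> * \<i> * cis t) * (-\<i>) = F u * u / (u - z)"
      by (simp add: u_def field_simps)
    also have "\<dots> = h u * of_real (\<rho>^2 - (norm z)^2) / ((u - z) * cnj (u - z))"
    proof -
      have g: "a * c / (u * w) * u / v = a * c / (v * w)" if "u \<noteq> 0" for a c w v :: complex
        using that by (simp add: field_simps)
      show ?thesis unfolding F_def e1 using g[OF u0] by simp
    qed
    also have "\<dots> = h u * of_real ((\<rho>^2 - (norm z)^2) / (norm (u - z))^2)"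
      unfolding e2[symmetric] by simp
    finally show ?thesis by (simp add: u_def)
  qed
  ultimately show ?thesis by (simp add: algebra_simps)
qed

lemma kernel_one:
  assumes "0 < \<rho>" and "norm z < \<rho>"
  shows "((\<lambda>t. (\<rho>^2 - (norm z)^2) / (norm (of_real \<rho> * cis t - z))^2) has_integral (2 * pi)) {0..2*pi}"
proof -
  have "((\<lambda>t. (\<lambda>_. 1::complex) (of_real \<rho> * cis t) * of_real ((\<rho>^2 - (norm z)^2) / (norm (of_real \<rho> * cis t - z))^2))
           has_integral (2 * pi * (\<lambda>_. 1::complex) z)) {0..2*pi}"
    by (rule kernel_identity[where R="\<rho>+1"]) (use assms in auto)
  then have "((\<lambda>t. complex_of_real ((\<rho>^2 - (norm z)^2) / (norm (of_real \<rho> * cis t - z))^2)) has_integral complex_of_real (2 * pi)) {0..2*pi}"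
    by (simp only: mult_1 mult_1_right)
  from has_integral_linear[OF this bounded_linear_Re] show ?thesis by (simp add: o_def)
qed

lemma young_simple:
  fixes x l p :: real
  assumes "0 \<le> x" "0 < l" "1 \<le> p"
  shows "x \<le> l + l powr (1 - p) * x powr p"
proof (cases "x \<le> l")
  case True
  have "0 \<le> l powr (1 - p) * x powr p" by simp
  with True show ?thesis by linarith
next
  case False
  then have xl: "l < x" by simp
  have "x powr p = x * x powr (p - 1)" using xl assms by (simp add: powr_diff powr_one_gt_zero_iff)
  moreover have "l powr (p - 1) \<le> x powr (p - 1)" using xl assms by (intro powr_mono2) auto
  ultimately have "x * l powr (p - 1) \<le> x powr p" using assms by (simp add: mult_left_mono)
  then have "l powr (1 - p) * (x * l powr (p - 1)) \<le> l powr (1 - p) * x powr p"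
    by (simp add: mult_left_mono)
  moreover have "l powr (1 - p) * (x * l powr (p - 1)) = x"
    using assms by (simp add: powr_add[symmetric])
  ultimately show ?thesis using assms by (smt (verit) powr_ge_zero mult_nonneg_nonneg)
qed

lemma circ_cont:
  assumes "h holomorphic_on ball 0 1" "0 \<le> \<rho>" "\<rho> < 1"
  shows "continuous_on A (\<lambda>t. h (of_real \<rho> * cis t))"
proof -
  have "continuous_on A (\<lambda>t. of_real \<rho> * cis t)" by (intro continuous_intros)
  moreover have "(\<lambda>t. of_real \<rho> * cis t) ` A \<subseteq> ball 0 1" using assms by (auto simp: norm_mult)
  ultimately show ?thesis
    using continuous_on_compose2[OF holomorphic_on_imp_continuous_on[OF assms(1)]] by blast
qed

lemma hardy_integrable:
  assumes "h holomorphic_on ball 0 1" "0 \<le> \<rho>" "\<rho> < 1" "0 < p"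
  shows "((\<lambda>t. norm (h (of_real \<rho> * cis t)) powr p) has_integral (2*pi * hardy_mean p h \<rho>)) {0..2*pi}"
proof -
  have "continuous_on {0..2*pi} (\<lambda>t. norm (h (of_real \<rho> * cis t)) powr p)"
    by (intro continuous_on_powr' continuous_intros circ_cont[OF assms(1-3)]) (use assms in auto)
  then have "(\<lambda>t. norm (h (of_real \<rho> * cis t)) powr p) integrable_on {0..2*pi}"
    by (rule integrable_continuous_interval)
  moreover have "2*pi*hardy_mean p h \<rho> = integral {0..2*pi} (\<lambda>t. norm (h (of_real \<rho> * cis t)) powr p)"
    by (simp add: hardy_mean_def)
  ultimately show ?thesis using has_integral_integral by metis
qed

lemma hardy_mean_nonneg: "0 \<le> hardy_mean p h r"
  unfolding hardy_mean_def
  by (cases "(\<lambda>t. norm (h (complex_of_real r * cis t)) powr p) integrable_on {0..2*pi}")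
     (auto intro!: divide_nonneg_pos integral_nonneg simp: not_integrable_integral)

lemma pointwise_bound:
  assumes p: "1 \<le> p" and holh: "h holomorphic_on ball 0 1"
    and bdd: "bdd_above (hardy_mean p h ` {0<..<1})" and z: "norm z < 1"
  shows "norm (h z) \<le> 2 * (4 * (SUP r\<in>{0<..<1}. hardy_mean p h r) / (1 - norm z)) powr (1/p)"
proof -
  define S where "S = (SUP r\<in>{0<..<1}. hardy_mean p h r)"
  define \<rho> where "\<rho> = (1 + norm z)/2"
  have \<rho>: "0 < \<rho>" "\<rho> < 1" "norm z < \<rho>" unfolding \<rho>_def using z norm_ge_zero[of z] by (auto simp del: norm_ge_zero)
  define P where "P t = (\<rho>^2 - (norm z)^2) / (norm (of_real \<rho> * cis t - z))^2" for t
  define Pm where "Pm = 4/(1 - norm z)"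
  have dpos: "\<rho> - norm z \<le> norm (of_real \<rho> * cis t - z)" for t
  proof -
    have "norm (of_real \<rho> * cis t) = \<rho>" using \<rho> by (simp add: norm_mult)
    then show ?thesis by (metis norm_triangle_ineq2)
  qed
  have Pnn: "0 \<le> P t" for t
    unfolding P_def using \<rho> by (intro divide_nonneg_nonneg) (auto intro!: power_mono)
  have Ple: "P t \<le> Pm" for t
  proof -
    define d where "d = norm (of_real \<rho> * cis t - z)"
    have d: "\<rho> - norm z \<le> d" "0 < \<rho> - norm z" using dpos \<rho> by (auto simp: d_def)
    have "P t = (\<rho> - norm z) * (\<rho> + norm z) / d^2" by (simp add: P_def d_def power2_eq_square algebra_simps)
    also have "\<dots> \<le> (\<rho> - norm z) * (\<rho> + norm z) / (\<rho> - norm z)^2"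
      using d \<rho> by (intro divide_left_mono mult_nonneg_nonneg power_mono mult_pos_pos) auto
    also have "\<dots> = (\<rho> + norm z) / (\<rho> - norm z)" using d by (simp add: power2_eq_square)
    also have "\<dots> = (1 + 3 * norm z) / (1 - norm z)" using z by (simp add: \<rho>_def field_simps)
    also have "\<dots> \<le> Pm" unfolding Pm_def using z by (intro divide_right_mono) auto
    finally show ?thesis .
  qed
  have I1: "((\<lambda>t. h (of_real \<rho> * cis t) * of_real (P t)) has_integral (2 * pi * h z)) {0..2*pi}"
    unfolding P_def by (rule kernel_identity[OF holh]) (use \<rho> in auto)
  have I2: "(P has_integral 2*pi) {0..2*pi}" unfolding P_def by (rule kernel_one) (use \<rho> in auto)
  define g where "g t = norm (h (of_real \<rho> * cis t))" for t
  have I3: "((\<lambda>t. g t powr p) has_integral (2*pi * hardy_mean p h \<rho>)) {0..2*pi}"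
    unfolding g_def by (rule hardy_integrable[OF holh]) (use \<rho> p in auto)
  have hmS: "hardy_mean p h \<rho> \<le> S" unfolding S_def by (rule cSUP_upper[OF _ bdd]) (use \<rho> in auto)
  have S0: "0 \<le> S" using hmS hardy_mean_nonneg[of p h \<rho>] by linarith
  have Pm0: "0 \<le> Pm" using z by (simp add: Pm_def)
  have contP: "continuous_on {0..2*pi} P"
  proof -
    have dnz: "(norm (of_real \<rho> * cis t - z))^2 \<noteq> 0" for t using dpos[of t] \<rho> by auto
    show ?thesis unfolding P_def by (intro continuous_intros) (use dnz in auto)
  qed
  have contg: "continuous_on {0..2*pi} g" unfolding g_def by (intro continuous_intros circ_cont[OF holh]) (use \<rho> in auto)
  have main: "norm (h z) \<le> l + l powr (1-p) * (Pm * S)" if l: "l > 0" for l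
  proof -
    have J: "((\<lambda>t. l * P t + l powr (1-p) * Pm * g t powr p) has_integral
              (l * (2*pi) + l powr (1-p) * Pm * (2*pi * hardy_mean p h \<rho>))) {0..2*pi}"
      by (intro has_integral_add has_integral_mult_right I2 I3)
    have "2*pi * norm (h z) = norm (integral {0..2*pi} (\<lambda>t. h (of_real \<rho> * cis t) * of_real (P t)))"
      using integral_unique[OF I1] by (simp add: norm_mult)
    also have "\<dots> \<le> integral {0..2*pi} (\<lambda>t. g t * P t)"
    proof (rule integral_norm_bound_integral)
      show "(\<lambda>t. h (of_real \<rho> * cis t) * of_real (P t)) integrable_on {0..2*pi}" using I1 by blast
      show "(\<lambda>t. g t * P t) integrable_on {0..2*pi}"
        by (intro integrable_continuous_interval continuous_intros contg contP)
      show "norm (h (of_real \<rho> * cis t) * of_real (P t)) \<le> g t * P t" for t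
        using Pnn[of t] by (simp add: g_def norm_mult)
    qed
    also have "\<dots> \<le> integral {0..2*pi} (\<lambda>t. l * P t + l powr (1-p) * Pm * g t powr p)"
    proof (rule integral_le)
      show "(\<lambda>t. g t * P t) integrable_on {0..2*pi}"
        by (intro integrable_continuous_interval continuous_intros contg contP)
      show "(\<lambda>t. l * P t + l powr (1-p) * Pm * g t powr p) integrable_on {0..2*pi}" using J by blast
      fix t
      have y: "g t \<le> l + l powr (1-p) * g t powr p" by (rule young_simple) (use l p in \<open>auto simp: g_def\<close>)
      have "g t * P t \<le> (l + l powr (1-p) * g t powr p) * P t" using y Pnn[of t] by (rule mult_right_mono)
      also have "\<dots> = l * P t + l powr (1-p) * g t powr p * P t" by (simp add: algebra_simps)
      also have "\<dots> \<le> l * P t + l powr (1-p) * g t powr p * Pm"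
        using Ple[of t] by (intro add_left_mono mult_left_mono) auto
      finally show "g t * P t \<le> l * P t + l powr (1-p) * Pm * g t powr p" by (simp add: algebra_simps)
    qed
    also have "\<dots> = l * (2*pi) + l powr (1-p) * Pm * (2*pi * hardy_mean p h \<rho>)"
      using integral_unique[OF J] .
    also have "\<dots> \<le> l * (2*pi) + l powr (1-p) * Pm * (2*pi * S)"
      using hmS Pm0 by (intro add_left_mono mult_left_mono) auto
    also have "\<dots> = 2*pi * (l + l powr (1-p) * (Pm * S))" by (simp add: algebra_simps)
    finally show ?thesis by simp
  qed
  define Q where "Q = Pm * S"
  have Q0: "0 \<le> Q" using Pm0 S0 by (simp add: Q_def)
  have "norm (h z) \<le> 2 * Q powr (1/p)"
  proof (cases "Q = 0")
    case True
    have "norm (h z) \<le> e" if "e > 0" for e using main[OF that] True unfolding Q_def by simp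
    then have "norm (h z) \<le> 0" by (meson dense not_le)
    then show ?thesis by simp
  next
    case False
    then have Qp: "0 < Q" using Q0 by simp
    have "(Q powr (1/p)) powr (1-p) * Q = Q powr (1/p)"
    proof -
      have "(Q powr (1/p)) powr (1-p) = Q powr ((1/p)*(1-p))" by (rule powr_powr)
      moreover have "Q = Q powr 1" using Qp by simp
      ultimately have "(Q powr (1/p)) powr (1-p) * Q = Q powr ((1/p)*(1-p)) * Q powr 1" by simp
      also have "\<dots> = Q powr ((1/p)*(1-p) + 1)" by (rule powr_add[symmetric])
      finally have "(Q powr (1/p)) powr (1-p) * Q = Q powr ((1/p)*(1-p) + 1)" .
      also have "(1/p)*(1-p) + 1 = 1/p" using p by (simp add: field_simps)
      finally show ?thesis .
    qed
    moreover have "norm (h z) \<le> Q powr (1/p) + (Q powr (1/p)) powr (1-p) * Q"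
      using main[of "Q powr (1/p)", folded Q_def] Qp by simp
    ultimately show ?thesis by simp
  qed
  then show ?thesis by (simp add: Q_def Pm_def S_def mult.commute)
qed



lemma hardy_mean_mono:
  assumes h1: "h1 holomorphic_on ball 0 1" and h2: "h2 holomorphic_on ball 0 1"
    and r: "0 \<le> r" "r < 1" and p: "0 < p" and c: "0 \<le> c"
    and le: "\<And>t. norm (h1 (of_real r * cis t)) \<le> c * norm (h2 (of_real r * cis t))"
  shows "hardy_mean p h1 r \<le> c powr p * hardy_mean p h2 r"
proof -
  note I1 = hardy_integrable[OF h1 r p]
  note I2 = has_integral_mult_right[OF hardy_integrable[OF h2 r p], of "c powr p"]
  have "2*pi * hardy_mean p h1 r \<le> c powr p * (2*pi * hardy_mean p h2 r)"
  proof (rule has_integral_le[OF I1 I2])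
    fix t
    have "norm (h1 (of_real r * cis t)) powr p \<le> (c * norm (h2 (of_real r * cis t))) powr p"
      using le[of t] p by (intro powr_mono2) auto
    also have "\<dots> = c powr p * norm (h2 (of_real r * cis t)) powr p"
      using c by (simp add: powr_mult)
    finally show "norm (h1 (of_real r * cis t)) powr p \<le> c powr p * norm (h2 (of_real r * cis t)) powr p" .
  qed
  then show ?thesis by (simp add: algebra_simps)
qed

lemma pointwise_bound':
  assumes p: "1 \<le> p" and holh: "h holomorphic_on ball 0 1"
    and bdd: "bdd_above (hardy_mean p h ` {0<..<1})" and z: "norm z < 1"
  shows "norm (h z) \<le> 2 * (4 / (1 - norm z)) powr (1/p) * Hardy_norm p h"
proof -
  have S0: "0 \<le> (SUP r\<in>{0<..<1}. hardy_mean p h r)"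
    using cSUP_upper[OF _ bdd, of "1/2"] hardy_mean_nonneg[of p h "1/2"] by simp
  have "(4 * (SUP r\<in>{0<..<1}. hardy_mean p h r) / (1 - norm z)) powr (1/p)
        = (4 / (1 - norm z)) powr (1/p) * Hardy_norm p h"
    unfolding Hardy_norm_def using S0 z by (simp add: powr_mult[symmetric])
  with pointwise_bound[OF assms] show ?thesis by simp
qed

lemma Hardy_norm_nonneg: "0 \<le> Hardy_norm p h"
  unfolding Hardy_norm_def by simp

lemma deriv2_bound:
  assumes p: "1 \<le> p" and holh: "h holomorphic_on ball 0 1"
    and bdd: "bdd_above (hardy_mean p h ` {0<..<1})" and s: "0 \<le> s" "s < 1" and w: "norm w \<le> s"
  shows "norm (deriv h w) \<le> (2/(1-s)) * (2 * (8/(1-s)) powr (1/p) * Hardy_norm p h)"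
proof -
  define r where "r = (1-s)/2"
  define AN where "AN = 2 * (8/(1-s)) powr (1/p) * Hardy_norm p h"
  have r: "0 < r" using s by (simp add: r_def)
  have AN0: "0 \<le> AN" by (simp add: AN_def Hardy_norm_nonneg)
  have sub: "cball w r \<subseteq> ball 0 1"
  proof
    fix \<zeta> assume "\<zeta> \<in> cball w r"
    then have "norm \<zeta> \<le> norm w + r" using norm_triangle_ineq2[of \<zeta> w] by (auto simp: dist_norm norm_minus_commute)
    moreover have "norm w + r < 1" using w s unfolding r_def by argo
    ultimately have "norm \<zeta> < 1" by linarith
    then show "\<zeta> \<in> ball 0 1" by simp
  qed
  have hb: "norm (h \<zeta>) \<le> AN" if "\<zeta> \<in> cball w r" for \<zeta>
  proof -
    have "norm \<zeta> \<le> norm w + r" using that norm_triangle_ineq2[of \<zeta> w] by (auto simp: dist_norm norm_minus_commute)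
    then have z1: "norm \<zeta> \<le> (1+s)/2" using w unfolding r_def by argo
    then have z2: "norm \<zeta> < 1" using s by argo
    have "4 / (1 - norm \<zeta>) \<le> 8/(1-s)"
    proof -
      have "(1-s)/2 \<le> 1 - norm \<zeta>" using z1 by simp
      then have "4 / (1 - norm \<zeta>) \<le> 4 / ((1-s)/2)" using s by (intro divide_left_mono) auto
      then show ?thesis by simp
    qed
    then have "(4 / (1 - norm \<zeta>)) powr (1/p) \<le> (8/(1-s)) powr (1/p)"
      using z2 p by (intro powr_mono2) auto
    then have "2 * (4 / (1 - norm \<zeta>)) powr (1/p) * Hardy_norm p h \<le> AN"
      unfolding AN_def by (intro mult_right_mono Hardy_norm_nonneg) auto
    with pointwise_bound'[OF p holh bdd z2] show ?thesis by linarith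
  qed
  have key: "norm (deriv h w) \<le> (AN + e)/r" if e: "0 < e" for e
  proof -
    have "norm ((deriv ^^ 1) h w) \<le> fact 1 * (AN + e) / r^1"
    proof (rule Cauchy_higher_deriv_bound[where y=0])
      show "h holomorphic_on ball w r" using holomorphic_on_subset[OF holh] sub ball_subset_cball by blast
      show "continuous_on (cball w r) h"
        using holomorphic_on_imp_continuous_on[OF holomorphic_on_subset[OF holh sub]] .
      show "h \<zeta> \<in> ball 0 (AN + e)" if "\<zeta> \<in> ball w r" for \<zeta> using hb[of \<zeta>] that e by auto
    qed (use r in auto)
    then show ?thesis by simp
  qed
  have "norm (deriv h w) \<le> AN / r"
  proof (rule field_le_epsilon)
    fix e :: real assume "0 < e"
    with key[of "e*r"] r show "norm (deriv h w) \<le> AN / r + e" by (simp add: add_divide_distrib)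
  qed
  then show ?thesis by (simp add: AN_def r_def)
qed

lemma suff:
  fixes p :: real and \<phi> :: "complex \<Rightarrow> complex"
  assumes p: "p > 1"
    and hol\<phi>: "\<phi> holomorphic_on ball 0 1"
    and maps: "\<phi> ` ball 0 1 \<subseteq> ball 0 1"
    and Sp\<phi>: "in_Sp p \<phi>"
    and sup: "(SUP z\<in>ball 0 1. norm (\<phi> z)) < 1"
  shows "comp_diff_bounded_Sp p \<phi>"
proof -
  define s where "s = (SUP z\<in>ball 0 1. norm (\<phi> z))"
  have bdd\<phi>: "bdd_above ((\<lambda>z. norm (\<phi> z)) ` ball 0 1)"
    using maps by (intro bdd_aboveI[where M=1]) auto
  have phis: "norm (\<phi> z) \<le> s" if "z \<in> ball 0 1" for z
    unfolding s_def by (rule cSUP_upper[OF that bdd\<phi>])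
  have s: "0 \<le> s" "s < 1" using phis[of 0] sup norm_ge_zero[of "\<phi> 0"] unfolding s_def by (auto simp del: norm_ge_zero)
  have p1: "1 \<le> p" using p by simp
  have hd\<phi>: "deriv \<phi> holomorphic_on ball 0 1" and bdd_d\<phi>: "bdd_above (hardy_mean p (deriv \<phi>) ` {0<..<1})"
    using Sp\<phi> unfolding in_Sp_def in_Hardy_def by auto
  define S\<phi> where "S\<phi> = (SUP r\<in>{0<..<1}. hardy_mean p (deriv \<phi>) r)"
  have S\<phi>0: "0 \<le> S\<phi>"
    using cSUP_upper[OF _ bdd_d\<phi>, of "1/2"] hardy_mean_nonneg[of p "deriv \<phi>" "1/2"] by (simp add: S\<phi>_def)
  define A1 where "A1 = 2 * (8/(1-s)) powr (1/p)"
  define L where "L = (2/(1-s)) * A1"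
  have A10: "0 \<le> A1" by (simp add: A1_def)
  have L0: "0 \<le> L" using s A10 by (simp add: L_def)
  define C where "C = A1 + L * Hardy_norm p (deriv \<phi>)"
  have main: "in_Sp p (comp_diff \<phi> f) \<and> Sp_norm p (comp_diff \<phi> f) \<le> C * Sp_norm p f" if f: "in_Sp p f" for f
  proof -
    define h where "h = deriv f"
    have holf: "f holomorphic_on ball 0 1" and holh: "h holomorphic_on ball 0 1"
      and bddh: "bdd_above (hardy_mean p h ` {0<..<1})"
      using f unfolding in_Sp_def in_Hardy_def h_def by auto
    define N where "N = Hardy_norm p h"
    have N0: "0 \<le> N" by (simp add: N_def Hardy_norm_nonneg)
    have b1: "norm (h (\<phi> z)) \<le> A1 * N" if z: "z \<in> ball 0 1" for z
    proof -
      have w1: "norm (\<phi> z) < 1" using maps z by (auto simp: image_subset_iff)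
      have "4 / (1 - norm (\<phi> z)) \<le> 8/(1-s)"
      proof -
        have "(1-s)/2 \<le> 1 - norm (\<phi> z)" using phis[OF z] s by argo
        then have "4 / (1 - norm (\<phi> z)) \<le> 4 / ((1-s)/2)" using s by (intro divide_left_mono) auto
        then show ?thesis by simp
      qed
      then have "(4 / (1 - norm (\<phi> z))) powr (1/p) \<le> (8/(1-s)) powr (1/p)"
        using w1 p by (intro powr_mono2) auto
      then have "2 * (4 / (1 - norm (\<phi> z))) powr (1/p) * N \<le> A1 * N"
        unfolding A1_def using N0 by (intro mult_right_mono) auto
      with pointwise_bound'[OF p1 holh bddh w1] show ?thesis by (simp add: N_def)
    qed
    have b2: "norm (deriv h (\<phi> z)) \<le> L * N" if z: "z \<in> ball 0 1" for z
      using deriv2_bound[OF p1 holh bddh s phis[OF z]] by (simp add: L_def A1_def N_def mult.assoc)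
    define g where "g = comp_diff \<phi> f"
    have g_eq: "g = h \<circ> \<phi>" by (simp add: g_def comp_diff_def h_def)
    have holg: "g holomorphic_on ball 0 1"
      unfolding g_eq by (rule holomorphic_on_compose_gen[OF hol\<phi> holh maps])
    have dg: "deriv g z = deriv h (\<phi> z) * deriv \<phi> z" if z: "z \<in> ball 0 1" for z
    proof -
      have "\<phi> field_differentiable at z" using holomorphic_on_imp_differentiable_at[OF hol\<phi> _ z] by simp
      moreover have "h field_differentiable at (\<phi> z)"
        using holomorphic_on_imp_differentiable_at[OF holh] maps z by (auto simp: image_subset_iff)
      ultimately show ?thesis unfolding g_eq by (rule deriv_chain)
    qed
    have holdg: "deriv g holomorphic_on ball 0 1" by (rule holomorphic_deriv[OF holg]) simp
    have hm: "hardy_mean p (deriv g) r \<le> (L * N) powr p * S\<phi>" if r: "r \<in> {0<..<1}" for r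
    proof -
      have "hardy_mean p (deriv g) r \<le> (L * N) powr p * hardy_mean p (deriv \<phi>) r"
      proof (rule hardy_mean_mono[OF holdg hd\<phi>])
        fix t
        have zz: "of_real r * cis t \<in> ball 0 1" using r by (simp add: norm_mult)
        show "norm (deriv g (of_real r * cis t)) \<le> L * N * norm (deriv \<phi> (of_real r * cis t))"
          unfolding dg[OF zz] norm_mult using b2[OF zz] by (intro mult_right_mono) auto
      qed (use r p L0 N0 in auto)
      also have "\<dots> \<le> (L * N) powr p * S\<phi>"
        unfolding S\<phi>_def by (intro mult_left_mono cSUP_upper[OF r bdd_d\<phi>]) auto
      finally show ?thesis .
    qed
    have bddg: "bdd_above (hardy_mean p (deriv g) ` {0<..<1})"
      using hm by (intro bdd_aboveI2) auto
    have inSp: "in_Sp p g" unfolding in_Sp_def in_Hardy_def using holg holdg bddg by auto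
    have "(SUP r\<in>{0<..<1}. hardy_mean p (deriv g) r) \<le> (L * N) powr p * S\<phi>"
      using hm by (intro cSUP_least) auto
    then have "Hardy_norm p (deriv g) \<le> ((L * N) powr p * S\<phi>) powr (1/p)"
      unfolding Hardy_norm_def using p
      by (intro powr_mono2) (auto intro!: cSUP_upper2[OF bddg, of "1/2"] hardy_mean_nonneg)
    also have "\<dots> = L * N * Hardy_norm p (deriv \<phi>)"
      using p L0 N0 S\<phi>0 by (simp add: powr_mult powr_powr Hardy_norm_def S\<phi>_def)
    finally have Hg: "Hardy_norm p (deriv g) \<le> L * N * Hardy_norm p (deriv \<phi>)" .
    have g0: "norm (g 0) \<le> A1 * N" using b1[of 0] by (simp add: g_eq)
    have "Sp_norm p g \<le> A1 * N + L * N * Hardy_norm p (deriv \<phi>)"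
      unfolding Sp_norm_def using g0 Hg by linarith
    also have "\<dots> = C * N" by (simp add: C_def algebra_simps)
    also have "\<dots> \<le> C * Sp_norm p f"
      unfolding Sp_norm_def N_def h_def C_def
      using A10 L0 Hardy_norm_nonneg[of p "deriv \<phi>"] by (intro mult_left_mono) auto
    finally show ?thesis using inSp by (simp add: g_def)
  qed
  show ?thesis unfolding comp_diff_bounded_Sp_def using main by blast
qed

lemma tlt: "0 \<le> t \<Longrightarrow> t \<le> 1 \<Longrightarrow> norm (z::complex) < 1 \<Longrightarrow> t * norm z < 1"
  by (smt (verit) mult_left_le_one_le norm_ge_zero)

lemma Sp_bound:
  assumes p: "p > 1" and g: "in_Sp p g" and z: "norm z < 1"
  shows "norm (g z) \<le> norm (g 0) + 2 * 4 powr (1/p) * (p/(p-1)) * Hardy_norm p (deriv g)"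
proof -
  have holg: "g holomorphic_on ball 0 1" and holdg: "deriv g holomorphic_on ball 0 1"
    and bdd: "bdd_above (hardy_mean p (deriv g) ` {0<..<1})"
    using g unfolding in_Sp_def in_Hardy_def by auto
  define N where "N = Hardy_norm p (deriv g)"
  define B where "B = 2 * 4 powr (1/p) * N"
  define a where "a = 1 - 1/p"
  define x where "x = norm z"
  have a: "0 < a" "a < 1" using p by (auto simp: a_def)
  have x: "0 \<le> x" "x < 1" using z by (auto simp: x_def)
  have B0: "0 \<le> B" by (simp add: B_def N_def Hardy_norm_nonneg)
  have pb: "norm (deriv g \<zeta>) \<le> B * (1 - norm \<zeta>) powr (a - 1)" if "norm \<zeta> < 1" for \<zeta>
  proof -
    have "(4 / (1 - norm \<zeta>)) powr (1/p) = 4 powr (1/p) * (1 - norm \<zeta>) powr (a - 1)"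
    proof -
      have "(4 / (1 - norm \<zeta>)) powr (1/p) = 4 powr (1/p) / (1 - norm \<zeta>) powr (1/p)"
        by (rule powr_divide)
      also have "1 / (1 - norm \<zeta>) powr (1/p) = (1 - norm \<zeta>) powr (a - 1)"
        by (simp add: a_def powr_minus_divide)
      then have "4 powr (1/p) / (1 - norm \<zeta>) powr (1/p) = 4 powr (1/p) * (1 - norm \<zeta>) powr (a - 1)"
        by (metis times_divide_eq_right mult_1_right)
      finally show ?thesis .
    qed
    with pointwise_bound'[of p "deriv g" \<zeta>] p holdg bdd that show ?thesis
      by (simp add: B_def N_def mult_ac)
  qed
  define F where "F t = g (of_real t * z)" for t :: real
  define \<Phi> where "\<Phi> t = - (B/a) * (1 - t * x) powr a" for t :: real
  have "norm (F 1 - F 0) \<le> \<Phi> 1 - \<Phi> 0"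
  proof (rule differentiable_bound_general[where f'="\<lambda>t. deriv g (of_real t * z) * z"
          and \<phi>'="\<lambda>t. B * x * (1 - t * x) powr (a - 1)"])
    show "(0::real) < 1" by simp
    show "continuous_on {0..1} F"
    proof -
      have "continuous_on {0..1} (\<lambda>t::real. of_real t * z)" by (intro continuous_intros)
      moreover have "(\<lambda>t::real. of_real t * z) ` {0..1} \<subseteq> ball 0 1"
        using z tlt by (auto simp: norm_mult)
      ultimately show ?thesis unfolding F_def
        using continuous_on_compose2[OF holomorphic_on_imp_continuous_on[OF holg]] by blast
    qed
    show "continuous_on {0..1} \<Phi>"
    proof -
      have "continuous_on {0..1} (\<lambda>t. (1 - t*x) powr a)"
      proof (rule continuous_on_powr'[where f="\<lambda>t. 1 - t*x" and g="\<lambda>t. a"])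
        show "\<forall>t\<in>{0..1}. 0 \<le> 1 - t * x \<and> (1 - t * x = 0 \<longrightarrow> 0 < a)"
          using a tlt[of _ z] z by (force simp: x_def)
      qed (intro continuous_intros)+
      then show ?thesis unfolding \<Phi>_def by (rule continuous_on_mult[OF continuous_on_const])
    qed
    fix t :: real assume t: "0 < t" "t < 1"
    have tz: "norm (of_real t * z) < 1" using t z tlt[of t z] by (auto simp: norm_mult)
    have tx: "0 < 1 - t * x" using t z tlt[of t z] by (simp add: x_def)
    have "((\<lambda>u. g (u * z)) has_field_derivative deriv g (of_real t * z) * z) (at (of_real t))"
    proof -
      have "(g has_field_derivative deriv g (of_real t * z)) (at (of_real t * z))"
        using holomorphic_derivI[OF holg _ ] tz by auto
      moreover have "((\<lambda>u. u * z) has_field_derivative z) (at (of_real t))"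
        by (auto intro!: derivative_eq_intros)
      ultimately show ?thesis using DERIV_chain'[of "\<lambda>u. u * z" z "of_real t" UNIV g] by simp
    qed
    from has_vector_derivative_real_field[OF this]
    show "(F has_vector_derivative deriv g (of_real t * z) * z) (at t)" unfolding F_def by simp
    have "((\<lambda>t. (1 - t * x) powr a) has_real_derivative a * (1 - t * x) powr (a - of_nat 1) * (- x)) (at t)"
      by (rule DERIV_fun_powr) (use tx in \<open>auto intro!: derivative_eq_intros\<close>)
    then have "(\<Phi> has_real_derivative (- (B/a)) * (a * (1 - t * x) powr (a - of_nat 1) * (- x))) (at t)"
      unfolding \<Phi>_def by (rule DERIV_cmult)
    moreover have "(- (B/a)) * (a * (1 - t * x) powr (a - of_nat 1) * (- x)) = B * x * (1 - t * x) powr (a - 1)"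
      using a by simp
    ultimately show "(\<Phi> has_vector_derivative B * x * (1 - t * x) powr (a - 1)) (at t)"
      by (simp add: has_real_derivative_iff_has_vector_derivative)
    have "norm (deriv g (of_real t * z)) \<le> B * (1 - t * x) powr (a - 1)"
      using pb[OF tz] t by (simp add: norm_mult x_def)
    then show "norm (deriv g (of_real t * z) * z) \<le> B * x * (1 - t * x) powr (a - 1)"
    proof -
      assume h: "norm (deriv g (of_real t * z)) \<le> B * (1 - t * x) powr (a - 1)"
      have "norm (deriv g (of_real t * z) * z) = norm (deriv g (of_real t * z)) * x" by (simp add: norm_mult x_def)
      also have "\<dots> \<le> B * (1 - t * x) powr (a - 1) * x" using h x by (intro mult_right_mono) auto
      finally show ?thesis by (simp add: mult_ac)
    qed
  qed
  also have "\<Phi> 1 - \<Phi> 0 = (B/a) * (1 - (1 - x) powr a)" by (simp add: \<Phi>_def algebra_simps)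
  also have "\<dots> \<le> B/a" using B0 a x by (intro mult_left_le) auto
  also have "B/a = 2 * 4 powr (1/p) * (p/(p-1)) * N" using p by (simp add: B_def a_def field_simps)
  finally have "norm (g z - g 0) \<le> 2 * 4 powr (1/p) * (p/(p-1)) * N" by (simp add: F_def)
  moreover have "norm (g z) \<le> norm (g 0) + norm (g z - g 0)" by (metis norm_triangle_sub add.commute)
  ultimately show ?thesis by (simp add: N_def)
qed

lemma test_fun:
  fixes w :: complex
  assumes p: "p > 1" and w: "norm w < 1"
  shows "\<exists>f. in_Sp p f \<and> Sp_norm p f \<le> (1 - (norm w)^2) powr (-1/p)
            \<and> norm (deriv f w) = (1 - (norm w)^2) powr (-2/p)"
proof -
  define e where "e \<zeta> = exp (- (2/p) * Ln (1 - cnj w * \<zeta>))" for \<zeta>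
  have Repos: "0 < Re (1 - cnj w * \<zeta>)" if "\<zeta> \<in> ball 0 1" for \<zeta>
  proof -
    have "norm (cnj w * \<zeta>) < 1"
      using that w by (simp add: norm_mult) (metis mult_strict_mono' norm_ge_zero mult_1_right less_imp_le mult_le_one less_le_trans le_less_trans mult_left_le_one_le)
    then have "Re (cnj w * \<zeta>) < 1" using complex_Re_le_cmod le_less_trans by blast
    then show ?thesis by simp
  qed
  have nz: "1 - cnj w * \<zeta> \<notin> \<real>\<^sub>\<le>\<^sub>0" if "\<zeta> \<in> ball 0 1" for \<zeta>
    using Repos[OF that] by (auto simp: complex_nonpos_Reals_iff)
  have hole: "e holomorphic_on ball 0 1"
    unfolding e_def by (intro holomorphic_intros) (use nz in auto)
  have norm_e: "norm (e \<zeta>) = norm (1 - cnj w * \<zeta>) powr (-2/p)" if "\<zeta> \<in> ball 0 1" for \<zeta>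
  proof -
    have u0: "1 - cnj w * \<zeta> \<noteq> 0" using Repos[OF that] by (metis less_irrefl zero_complex.sel(1))
    then show ?thesis by (simp add: e_def powr_def)
  qed
  obtain F where F: "\<And>x. x \<in> ball 0 1 \<Longrightarrow> (F has_field_derivative e x) (at x within ball 0 1)"
    using holomorphic_convex_primitive'[OF convex_ball open_ball hole] by blast
  define f where "f \<zeta> = F \<zeta> - F 0" for \<zeta>
  have fd: "(f has_field_derivative e x) (at x)" if "x \<in> ball 0 1" for x
  proof -
    have "(F has_field_derivative e x) (at x)" using F[OF that] at_within_open[OF that open_ball] by simp
    then show ?thesis unfolding f_def by (auto intro!: derivative_eq_intros)
  qed
  have df: "deriv f x = e x" if "x \<in> ball 0 1" for x using fd[OF that] by (rule DERIV_imp_deriv)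
  have holf: "f holomorphic_on ball 0 1" unfolding holomorphic_on_open[OF open_ball] using fd by blast
  have holdf: "deriv f holomorphic_on ball 0 1" by (rule holomorphic_transform[OF hole]) (simp add: df)
  have hm: "hardy_mean p (deriv f) r \<le> 1 / (1 - (norm w)^2)" if r: "r \<in> {0<..<1}" for r
  proof -
    have r0: "0 < r" "r < 1" using r by auto
    define z0 where "z0 = w * of_real (r^2)"
    have nz0: "norm z0 = norm w * r^2" using r0 by (simp add: z0_def norm_mult del: of_real_power)
    have z0r: "norm z0 < r"
    proof -
      have "norm w * r^2 < 1 * r" using w r0 by (intro mult_strict_mono) (auto simp: power2_eq_square)
      then show ?thesis using nz0 by simp
    qed
    define c where "c = 1 - (norm w)^2 * r^2"
    have c0: "0 < c"
    proof -
      have "(norm w)^2 * r^2 < 1 * 1" using w r0 by (intro mult_strict_mono) (auto simp: abs_square_less_1)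
      then show ?thesis by (simp add: c_def)
    qed
    have ident: "norm (deriv f (of_real r * cis t)) powr p = (1/c) * ((r^2 - (norm z0)^2) / (norm (of_real r * cis t - z0))^2)" for t
    proof -
      have inb: "of_real r * cis t \<in> ball 0 1" using r0 by (simp add: norm_mult)
      define u where "u = 1 - cnj w * (of_real r * cis t)"
      have u0: "0 < norm u" using Repos[OF inb] unfolding u_def by (metis less_irrefl zero_complex.sel(1) zero_less_norm_iff)
      have "norm (deriv f (of_real r * cis t)) powr p = (norm u powr (-2/p)) powr p"
        using df[OF inb] norm_e[OF inb] by (simp add: u_def)
      also have "\<dots> = norm u powr (-2)" using p by (simp add: powr_powr)
      also have "\<dots> = 1 / (norm u)^2" using u0 by (simp add: powr_minus_divide powr_realpow)
      finally have L: "norm (deriv f (of_real r * cis t)) powr p = 1 / (norm u)^2" .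
      have "cnj (cis t) * (cis t - w * of_real r) = cnj u"
      proof -
        have cc: "cis t * cis (- t) = 1" by (simp add: cis_mult)
        show ?thesis by (simp add: u_def algebra_simps cis_cnj cc)
      qed
      then have "norm (cis t - w * of_real r) = norm u"
        by (metis complex_mod_cnj norm_mult norm_cis mult_1)
      moreover have "of_real r * cis t - z0 = of_real r * (cis t - w * of_real r)"
        by (simp add: z0_def algebra_simps power2_eq_square)
      ultimately have nd: "norm (of_real r * cis t - z0) = r * norm u" using r0 by (simp add: norm_mult)
      have "(r^2 - (norm z0)^2) / (norm (of_real r * cis t - z0))^2 = c / (norm u)^2"
        unfolding nd nz0 c_def using r0 u0 by (simp add: field_simps power2_eq_square)
      then show ?thesis using L c0 by simp
    qed
    have I: "((\<lambda>t. norm (deriv f (of_real r * cis t)) powr p) has_integral (1/c) * (2*pi)) {0..2*pi}"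
      unfolding ident by (rule has_integral_mult_right[OF kernel_one]) (use r0 z0r in auto)
    have "hardy_mean p (deriv f) r = 1/c"
      unfolding hardy_mean_def using integral_unique[OF I] by simp
    also have "\<dots> \<le> 1 / (1 - (norm w)^2)"
    proof -
      have "(norm w)^2 * r^2 \<le> (norm w)^2" using r0 by (simp add: mult_left_le power_le_one)
      then have "1 - (norm w)^2 \<le> c" by (simp add: c_def)
      moreover have "0 < 1 - (norm w)^2" using w by (simp add: abs_square_less_1)
      ultimately show ?thesis using c0 by (intro divide_left_mono) auto
    qed
    finally show ?thesis .
  qed
  have bdd: "bdd_above (hardy_mean p (deriv f) ` {0<..<1})" using hm by (intro bdd_aboveI2) auto
  have inSp: "in_Sp p f" unfolding in_Sp_def in_Hardy_def using holf holdf bdd by auto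
  have "Hardy_norm p (deriv f) \<le> (1 / (1 - (norm w)^2)) powr (1/p)"
    unfolding Hardy_norm_def using p
    by (intro powr_mono2 cSUP_least) (auto intro!: cSUP_upper2[OF bdd, of "1/2"] hardy_mean_nonneg hm)
  also have "\<dots> = (1 - (norm w)^2) powr (-1/p)"
    by (simp add: powr_divide powr_minus_divide)
  finally have "Sp_norm p f \<le> (1 - (norm w)^2) powr (-1/p)" by (simp add: Sp_norm_def f_def)
  moreover have "norm (deriv f w) = (1 - (norm w)^2) powr (-2/p)"
  proof -
    have wb: "w \<in> ball 0 1" using w by simp
    have "1 - cnj w * w = of_real (1 - (norm w)^2)" using complex_norm_square[of w] by (simp add: mult.commute)
    moreover have "0 \<le> 1 - (norm w)^2" using w by (simp add: abs_square_le_1)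
    moreover have "norm ((1::complex) - (of_real (norm w))^2) = 1 - (norm w)^2"
    proof -
      have "(1::complex) - (of_real (norm w))^2 = of_real (1 - (norm w)^2)" by simp
      then show ?thesis using w by (simp only: norm_of_real) (simp add: abs_square_le_1)
    qed
    ultimately show ?thesis using df[OF wb] norm_e[OF wb] by simp
  qed
  ultimately show ?thesis using inSp by blast
qed

lemma nec:
  fixes p :: real and \<phi> :: "complex \<Rightarrow> complex"
  assumes p: "p > 1"
    and hol\<phi>: "\<phi> holomorphic_on ball 0 1"
    and maps: "\<phi> ` ball 0 1 \<subseteq> ball 0 1"
    and bd: "comp_diff_bounded_Sp p \<phi>"
  shows "(SUP z\<in>ball 0 1. norm (\<phi> z)) < 1"
proof -
  obtain C where inS: "\<And>f. in_Sp p f \<Longrightarrow> in_Sp p (comp_diff \<phi> f)"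
    and C: "\<And>f. in_Sp p f \<Longrightarrow> Sp_norm p (comp_diff \<phi> f) \<le> C * Sp_norm p f"
    using bd unfolding comp_diff_bounded_Sp_def by blast
  define M where "M = max 1 (2 * 4 powr (1/p) * (p/(p-1)))"
  define K where "K = M * max C 0"
  have M1: "1 \<le> M" by (simp add: M_def)
  have key: "0 < K \<and> 1 / (1 - (norm (\<phi> z))^2) \<le> K powr p" if z: "z \<in> ball 0 1" for z
  proof -
    define w where "w = \<phi> z"
    have w: "norm w < 1" using maps z by (auto simp: w_def image_subset_iff)
    define u where "u = 1 - (norm w)^2"
    have u: "0 < u" using w by (simp add: u_def abs_square_less_1)
    obtain f where f: "in_Sp p f" and fn: "Sp_norm p f \<le> u powr (-1/p)"
      and fw: "norm (deriv f w) = u powr (-2/p)"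
      using test_fun[OF p w] unfolding u_def by blast
    define g where "g = comp_diff \<phi> f"
    have g: "in_Sp p g" using inS[OF f] by (simp add: g_def)
    have gz: "g z = deriv f w" by (simp add: g_def comp_diff_def w_def)
    have "u powr (-2/p) = norm (g z)" using fw gz by simp
    also have "\<dots> \<le> norm (g 0) + 2 * 4 powr (1/p) * (p/(p-1)) * Hardy_norm p (deriv g)"
      by (rule Sp_bound[OF p g]) (use z in simp)
    also have "\<dots> \<le> M * norm (g 0) + M * Hardy_norm p (deriv g)"
    proof (rule add_mono)
      show "norm (g 0) \<le> M * norm (g 0)" using M1 by (simp add: mult_le_cancel_right1)
      show "2 * 4 powr (1/p) * (p/(p-1)) * Hardy_norm p (deriv g) \<le> M * Hardy_norm p (deriv g)"
        by (intro mult_right_mono Hardy_norm_nonneg) (simp add: M_def)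
    qed
    also have "\<dots> = M * Sp_norm p g" by (simp add: Sp_norm_def algebra_simps)
    also have "\<dots> \<le> M * (C * Sp_norm p f)" using C[OF f] M1 by (simp add: g_def)
    also have "\<dots> \<le> M * (max C 0 * Sp_norm p f)"
    proof -
      have "0 \<le> Sp_norm p f" by (simp add: Sp_norm_def Hardy_norm_nonneg)
      then have "C * Sp_norm p f \<le> max C 0 * Sp_norm p f" by (intro mult_right_mono) auto
      then show ?thesis using M1 by (intro mult_left_mono) auto
    qed
    also have "\<dots> \<le> K * u powr (-1/p)"
      unfolding K_def using fn M1 by (simp add: mult.assoc mult_left_mono)
    finally have A: "u powr (-2/p) \<le> K * u powr (-1/p)" .
    define v where "v = u powr (-1/p)"
    have v: "0 < v" using u by (simp add: v_def)
    have "u powr (-2/p) = v * v" unfolding v_def using u by (simp add: powr_add[symmetric])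
    with A have "v * v \<le> K * v" by (simp add: v_def)
    then have vK: "v \<le> K" using v by simp
    then have K0: "0 < K" using v by simp
    have "v powr p \<le> K powr p" using vK v p by (intro powr_mono2) auto
    moreover have "v powr p = 1 / u"
    proof -
      have "v powr p = u powr ((-1/p) * p)" unfolding v_def by (rule powr_powr)
      also have "(-1/p) * p = -1" using p by simp
      finally show ?thesis using u by (simp add: powr_minus_divide)
    qed
    ultimately show ?thesis using K0 by (simp add: u_def w_def)
  qed
  have K0: "0 < K" using key[of 0] by simp
  define s0 where "s0 = sqrt (1 - 1 / K powr p)"
  have Kp: "0 < K powr p" using K0 by simp
  have "norm (\<phi> z) \<le> s0" if z: "z \<in> ball 0 1" for z
  proof -
    have w: "norm (\<phi> z) < 1" using maps z by (auto simp: image_subset_iff)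
    have u: "0 < 1 - (norm (\<phi> z))^2" using w by (simp add: abs_square_less_1)
    have "1 / (1 - (norm (\<phi> z))^2) \<le> K powr p" using key[OF z] by simp
    then have "1 / K powr p \<le> 1 - (norm (\<phi> z))^2" using u Kp by (simp add: field_simps)
    then have "(norm (\<phi> z))^2 \<le> 1 - 1 / K powr p" by simp
    then show ?thesis unfolding s0_def by (simp add: real_le_rsqrt)
  qed
  then have "(SUP z\<in>ball 0 1. norm (\<phi> z)) \<le> s0" by (intro cSUP_least) auto
  also have "s0 < 1" unfolding s0_def using Kp by simp
  finally show ?thesis .
qed

theorem theorem3p3:
  fixes p :: real and \<phi> :: "complex \<Rightarrow> complex"
  assumes "p > 1"
    and "\<phi> holomorphic_on ball 0 1"
    and "\<phi> ` ball 0 1 \<subseteq> ball 0 1"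
    and "in_Sp p \<phi>"
  shows "comp_diff_bounded_Sp p \<phi> \<longleftrightarrow> (SUP z\<in>ball 0 1. norm (\<phi> z)) < 1"
  using nec[OF assms(1-3)] suff[OF assms] by blast


end
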